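(* Let $Q=ABCD$ be a non-degenerate convex quadrangle of perimeter $2$ with $s_1=|AB|$, $s_2=|BC|$, $s_3=|CD|$, $s_4=|DA|$. Let $B_1$ be the point lying in the same open half-plane with respect to the line $AC$ as $B$ with $|B_1A|=(s_2+s_3+s_4-s_1)/2$ and $|B_1C|=(s_1+s_3+s_4-s_2)/2$, and let $D_1$ be the point lying in the same open half-plane with respect to $AC$ as $D$ with $|D_1A|=(s_1+s_2+s_3-s_4)/2$ and $|D_1C|=(s_1+s_2+s_4-s_3)/2$. Then these points exist and the quadrangle $AB_1CD_1$ is congruent to the dual quadrangle $Q^\circ=KLMN$, via an isometry sending $K,L,M,N$ to $A,B_1,C,D_1$ respectively.
   Context: Identify $\mathbb{R}^2$ with $\mathbb{C}$. A quadrangle $Q=ABCD$ is an ordered 4-tuple of points $A,B,C,D\in\mathbb{C}$: $A$ is the first vertex and the order $A\to B\to C\to D\to A$ is the direction of traversal. Its edge vectors are $z_1=B-A$, $z_2=C-B$, $z_3=D-C$, $z_4=A-D$, so $z_1+z_2+z_3+z_4=0$; its perimeter is $|z_1|+|z_2|+|z_3|+|z_4|$. $Q$ is non-degenerate if each pair of consecutive edge vectors $(z_1,z_2),(z_2,z_3),(z_3,z_4),(z_4,z_1)$ consists of nonzero, non-collinear vectors. A non-degenerate quadrangle is convex if no two opposite edges intersect and all its interior angles are less than $\pi$. Associated plane: for a non-degenerate $Q$ of perimeter $2$, choose $u_1,\dots,u_4\in\mathbb{C}$ with $u_k^2=z_k$, where $u_1$ is an arbitrary square root of $z_1$ and for $k=1,2,3$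 the sign of $u_{k+1}$ is chosen so that $\operatorname{Im}(\overline{u_k}u_{k+1})$ has the same sign as $\operatorname{Im}(\overline{z_k}z_{k+1})$. Write $u_k=a_k+i b_k$ and $\bar a=(a_1,a_2,a_3,a_4)$, $\bar b=(b_1,b_2,b_3,b_4)$; these are orthonormal in $\mathbb{R}^4$. Let $\Pi=\operatorname{span}(\bar a,\bar b)$ and $\Pi^\perp$ its orthogonal complement. Dual quadrangle: choose an orthonormal basis $(\bar c,\bar d)$ of $\Pi^\perp$, put $w_k=(c_k+i d_k)^2$; then $\sum_k w_k=0$ and $\sum_k|w_k|=2$. The dual quadrangle $Q^\circ=KLMN$ is the quadrangle with $L-K=w_1$, $M-L=w_2$, $N-M=w_3$, $K-N=w_4$. It is determined up to rotation, reflection and translation. *)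

theory Defs
  imports "HOL-Analysis.Analysis"
begin

definition edge :: "complex \<Rightarrow> complex \<Rightarrow> complex \<Rightarrow> complex \<Rightarrow> nat \<Rightarrow> complex" where
  "edge A B C D k =
     (if k = 1 then B - A else if k = 2 then C - B else if k = 3 then D - C else A - D)"

definition nxt :: "nat \<Rightarrow> nat" where
  "nxt k = k mod 4 + 1"

definition cross :: "complex \<Rightarrow> complex \<Rightarrow> real" where
  "cross z w = Im (cnj z * w)"

definition perimeter :: "complex \<Rightarrow> complex \<Rightarrow> complex \<Rightarrow> complex \<Rightarrow> real" where
  "perimeter A B C D = (\<Sum>k\<in>{1..4}. cmod (edge A B C D k))"

definition nondegenerate :: "complex \<Rightarrow> complex \<Rightarrow> complex \<Rightarrow> complex \<Rightarrow> bool" where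
  "nondegenerate A B C D \<longleftrightarrow>
     (\<forall>k\<in>{1..4}. edge A B C D k \<noteq> 0 \<and> edge A B C D (nxt k) \<noteq> 0 \<and>
                 cross (edge A B C D k) (edge A B C D (nxt k)) \<noteq> 0)"

text \<open>twice the signed area (shoelace formula); its sign is the orientation of traversal\<close>
definition signed_area2 :: "complex \<Rightarrow> complex \<Rightarrow> complex \<Rightarrow> complex \<Rightarrow> real" where
  "signed_area2 A B C D = cross A B + cross B C + cross C D + cross D A"

text \<open>Convex: no two opposite edges intersect, and every interior angle is less than pi,
  i.e. at every vertex the polygon turns in the direction of its orientation.\<close>
definition convex_quad :: "complex \<Rightarrow> complex \<Rightarrow> complex \<Rightarrow> complex \<Rightarrow> bool" where
  "convex_quad A B C D \<longleftrightarrow> nondegenerate A B C D \<and>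
     closed_segment A B \<inter> closed_segment C D = {} \<and>
     closed_segment B C \<inter> closed_segment D A = {} \<and>
     (\<forall>k\<in>{1..4}. cross (edge A B C D k) (edge A B C D (nxt k)) * signed_area2 A B C D > 0)"

definition same_open_side :: "complex \<Rightarrow> complex \<Rightarrow> complex \<Rightarrow> complex \<Rightarrow> bool" where
  "same_open_side P Q X Y \<longleftrightarrow> cross (Q - P) (X - P) * cross (Q - P) (Y - P) > 0"

definition admissible_roots :: "complex \<Rightarrow> complex \<Rightarrow> complex \<Rightarrow> complex \<Rightarrow> (nat \<Rightarrow> complex) \<Rightarrow> bool" where
  "admissible_roots A B C D u \<longleftrightarrow>
     (\<forall>k\<in>{1..4}. (u k)\<^sup>2 = edge A B C D k) \<and>
     (\<forall>k\<in>{1..3}. sgn (cross (u k) (u (k+1))) = sgn (cross (edge A B C D k) (edge A B C D (k+1))))"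

text \<open>(c, d) is an orthonormal basis of the orthogonal complement in R^4 of the plane
  spanned by a = Re u and b = Im u (vectors indexed by 1..4).\<close>
definition dual_basis :: "(nat \<Rightarrow> complex) \<Rightarrow> (nat \<Rightarrow> real) \<Rightarrow> (nat \<Rightarrow> real) \<Rightarrow> bool" where
  "dual_basis u c d \<longleftrightarrow>
     (\<Sum>k\<in>{1..4}. c k * Re (u k)) = 0 \<and> (\<Sum>k\<in>{1..4}. c k * Im (u k)) = 0 \<and>
     (\<Sum>k\<in>{1..4}. d k * Re (u k)) = 0 \<and> (\<Sum>k\<in>{1..4}. d k * Im (u k)) = 0 \<and>
     (\<Sum>k\<in>{1..4}. c k * c k) = 1 \<and> (\<Sum>k\<in>{1..4}. d k * d k) = 1 \<and>
     (\<Sum>k\<in>{1..4}. c k * d k) = 0"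

definition dual_edge :: "(nat \<Rightarrow> real) \<Rightarrow> (nat \<Rightarrow> real) \<Rightarrow> nat \<Rightarrow> complex" where
  "dual_edge c d k = (Complex (c k) (d k))\<^sup>2"

definition dual_quad :: "complex \<Rightarrow> complex \<Rightarrow> complex \<Rightarrow> complex \<Rightarrow>
    complex \<Rightarrow> complex \<Rightarrow> complex \<Rightarrow> complex \<Rightarrow> bool" where
  "dual_quad A B C D K L M N \<longleftrightarrow>
     (\<exists>u c d. admissible_roots A B C D u \<and> dual_basis u c d \<and>
        L - K = dual_edge c d 1 \<and> M - L = dual_edge c d 2 \<and>
        N - M = dual_edge c d 3 \<and> K - N = dual_edge c d 4)"

definition isometry :: "(complex \<Rightarrow> complex) \<Rightarrow> bool" where
  "isometry f \<longleftrightarrow> (\<forall>x y. dist (f x) (f y) = dist x y)"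

end

theory Submission
  imports Defs
begin

lemma lin10:
  fixes p1 p2 p3 p4 q1 q2 q3 q4 q5 q6 :: real
  assumes "p1+p2+p3+p4+2*(q1+q2+q3+q4+q5+q6) = 0" "p1\<ge>0" "p2\<ge>0" "p3\<ge>0" "p4\<ge>0"
   "q1\<ge>0" "q2\<ge>0" "q3\<ge>0" "q4\<ge>0" "q5\<ge>0" "q6\<ge>0"
  shows "p1=0 \<and> p2=0 \<and> p3=0 \<and> p4=0 \<and> q1=0 \<and> q2=0 \<and> q3=0 \<and> q4=0 \<and> q5=0 \<and> q6=0"
  using assms by auto

lemma sos10:
  fixes x1 x2 x3 x4 y1 y2 y3 y4 y5 y6 :: real
  assumes "x1\<^sup>2+x2\<^sup>2+x3\<^sup>2+x4\<^sup>2+2*(y1\<^sup>2+y2\<^sup>2+y3\<^sup>2+y4\<^sup>2+y5\<^sup>2+y6\<^sup>2) = 0"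
  shows "x1=0 \<and> x2=0 \<and> x3=0 \<and> x4=0 \<and> y1=0 \<and> y2=0 \<and> y3=0 \<and> y4=0 \<and> y5=0 \<and> y6=0"
  using lin10[OF assms] by simp

lemma rows_orth:
  fixes a1 a2 a3 a4 b1 b2 b3 b4 c1 c2 c3 c4 d1 d2 d3 d4 :: real
  assumes "a1*a1+a2*a2+a3*a3+a4*a4 = 1" "b1*b1+b2*b2+b3*b3+b4*b4 = 1"
    "c1*c1+c2*c2+c3*c3+c4*c4 = 1" "d1*d1+d2*d2+d3*d3+d4*d4 = 1"
    "a1*b1+a2*b2+a3*b3+a4*b4 = 0" "a1*c1+a2*c2+a3*c3+a4*c4 = 0"
    "a1*d1+a2*d2+a3*d3+a4*d4 = 0" "b1*c1+b2*c2+b3*c3+b4*c4 = 0"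
    "b1*d1+b2*d2+b3*d3+b4*d4 = 0" "c1*d1+c2*d2+c3*d3+c4*d4 = 0"
  shows "a1*a1+b1*b1+c1*c1+d1*d1 = 1 \<and> a2*a2+b2*b2+c2*c2+d2*d2 = 1 \<and>
         a3*a3+b3*b3+c3*c3+d3*d3 = 1 \<and> a4*a4+b4*b4+c4*c4+d4*d4 = 1 \<and>
         a1*a2+b1*b2+c1*c2+d1*d2 = 0 \<and> a1*a3+b1*b3+c1*c3+d1*d3 = 0 \<and>
         a1*a4+b1*b4+c1*c4+d1*d4 = 0 \<and> a2*a3+b2*b3+c2*c3+d2*d3 = 0 \<and>
         a2*a4+b2*b4+c2*c4+d2*d4 = 0 \<and> a3*a4+b3*b4+c3*c4+d3*d4 = 0"
proof -
  define G where "G = (a1*a1+a2*a2+a3*a3+a4*a4)\<^sup>2 + (b1*b1+b2*b2+b3*b3+b4*b4)\<^sup>2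
    + (c1*c1+c2*c2+c3*c3+c4*c4)\<^sup>2 + (d1*d1+d2*d2+d3*d3+d4*d4)\<^sup>2
    + 2*((a1*b1+a2*b2+a3*b3+a4*b4)\<^sup>2 + (a1*c1+a2*c2+a3*c3+a4*c4)\<^sup>2 + (a1*d1+a2*d2+a3*d3+a4*d4)\<^sup>2
     + (b1*c1+b2*c2+b3*c3+b4*c4)\<^sup>2 + (b1*d1+b2*d2+b3*d3+b4*d4)\<^sup>2 + (c1*d1+c2*d2+c3*d3+c4*d4)\<^sup>2)
    - 2*((a1*a1+a2*a2+a3*a3+a4*a4) + (b1*b1+b2*b2+b3*b3+b4*b4)
    + (c1*c1+c2*c2+c3*c3+c4*c4) + (d1*d1+d2*d2+d3*d3+d4*d4)) + 4"
  have G0: "G = 0" unfolding G_def using assms by simp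
  have "(a1*a1+b1*b1+c1*c1+d1*d1 - 1)\<^sup>2 + (a2*a2+b2*b2+c2*c2+d2*d2 - 1)\<^sup>2 +
        (a3*a3+b3*b3+c3*c3+d3*d3 - 1)\<^sup>2 + (a4*a4+b4*b4+c4*c4+d4*d4 - 1)\<^sup>2 +
        2*((a1*a2+b1*b2+c1*c2+d1*d2)\<^sup>2 + (a1*a3+b1*b3+c1*c3+d1*d3)\<^sup>2 +
         (a1*a4+b1*b4+c1*c4+d1*d4)\<^sup>2 + (a2*a3+b2*b3+c2*c3+d2*d3)\<^sup>2 +
         (a2*a4+b2*b4+c2*c4+d2*d4)\<^sup>2 + (a3*a4+b3*b4+c3*c4+d3*d4)\<^sup>2) = G"
    unfolding G_def by (simp add: power2_eq_square algebra_simps)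
  then have S: "(a1*a1+b1*b1+c1*c1+d1*d1 - 1)\<^sup>2 + (a2*a2+b2*b2+c2*c2+d2*d2 - 1)\<^sup>2 +
        (a3*a3+b3*b3+c3*c3+d3*d3 - 1)\<^sup>2 + (a4*a4+b4*b4+c4*c4+d4*d4 - 1)\<^sup>2 +
        2*((a1*a2+b1*b2+c1*c2+d1*d2)\<^sup>2 + (a1*a3+b1*b3+c1*c3+d1*d3)\<^sup>2 +
         (a1*a4+b1*b4+c1*c4+d1*d4)\<^sup>2 + (a2*a3+b2*b3+c2*c3+d2*d3)\<^sup>2 +
         (a2*a4+b2*b4+c2*c4+d2*d4)\<^sup>2 + (a3*a4+b3*b4+c3*c4+d3*d4)\<^sup>2) = 0" using G0 by simp
  from sos10[OF S] show ?thesis by simp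
qed

lemma diag_eq:
  fixes a1 a2 b1 b2 c1 c2 d1 d2 :: real
  assumes "a1*a1+b1*b1+c1*c1+d1*d1 = 1" "a2*a2+b2*b2+c2*c2+d2*d2 = 1" "a1*a2+b1*b2+c1*c2+d1*d2 = 0"
  shows "(c1\<^sup>2-d1\<^sup>2+(c2\<^sup>2-d2\<^sup>2))\<^sup>2 + (2*c1*d1+2*c2*d2)\<^sup>2 = (a1\<^sup>2-b1\<^sup>2+(a2\<^sup>2-b2\<^sup>2))\<^sup>2 + (2*a1*b1+2*a2*b2)\<^sup>2"
  using assms by algebra

lemma aux4: "2*x*y*(2*z*w) = 4*(x*z)*(y*(w::real))" by (simp add: algebra_simps)

lemma cross_eq:
  fixes a1 a2 a3 a4 b1 b2 b3 b4 c1 c2 c3 c4 d1 d2 d3 d4 :: real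
  assumes "a1*a2+b1*b2+c1*c2+d1*d2 = 0" "a1*a3+b1*b3+c1*c3+d1*d3 = 0"
         "a1*a4+b1*b4+c1*c4+d1*d4 = 0" "a2*a3+b2*b3+c2*c3+d2*d3 = 0"
         "a2*a4+b2*b4+c2*c4+d2*d4 = 0" "a3*a4+b3*b4+c3*c4+d3*d4 = 0"
  shows "((c1\<^sup>2-d1\<^sup>2)*(2*c2*d2) - (2*c1*d1)*(c2\<^sup>2-d2\<^sup>2)) * ((c3\<^sup>2-d3\<^sup>2)*(2*c4*d4) - (2*c3*d3)*(c4\<^sup>2-d4\<^sup>2))
       = ((a1\<^sup>2-b1\<^sup>2)*(2*a2*b2) - (2*a1*b1)*(a2\<^sup>2-b2\<^sup>2)) * ((a3\<^sup>2-b3\<^sup>2)*(2*a4*b4) - (2*a3*b3)*(a4\<^sup>2-b4\<^sup>2))"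
proof -
  have e1: "(c1\<^sup>2-d1\<^sup>2)*(2*c2*d2) - (2*c1*d1)*(c2\<^sup>2-d2\<^sup>2) = 2*(c1*c2+d1*d2)*(c1*d2-c2*d1)"
    by (simp add: power2_eq_square algebra_simps)
  have e2: "(c3\<^sup>2-d3\<^sup>2)*(2*c4*d4) - (2*c3*d3)*(c4\<^sup>2-d4\<^sup>2) = 2*(c3*c4+d3*d4)*(c3*d4-c4*d3)"
    by (simp add: power2_eq_square algebra_simps)
  have e3: "(a1\<^sup>2-b1\<^sup>2)*(2*a2*b2) - (2*a1*b1)*(a2\<^sup>2-b2\<^sup>2) = 2*(a1*a2+b1*b2)*(a1*b2-a2*b1)"
    by (simp add: power2_eq_square algebra_simps)
  have e4: "(a3\<^sup>2-b3\<^sup>2)*(2*a4*b4) - (2*a3*b3)*(a4\<^sup>2-b4\<^sup>2) = 2*(a3*a4+b3*b4)*(a3*b4-a4*b3)"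
    by (simp add: power2_eq_square algebra_simps)
  have m1: "(c1*d2-c2*d1)*(c3*d4-c4*d3) = (c1*c3+d1*d3)*(c2*c4+d2*d4) - (c1*c4+d1*d4)*(c2*c3+d2*d3)"
    by (simp add: algebra_simps)
  have m2: "(a1*b2-a2*b1)*(a3*b4-a4*b3) = (a1*a3+b1*b3)*(a2*a4+b2*b4) - (a1*a4+b1*b4)*(a2*a3+b2*b3)"
    by (simp add: algebra_simps)
  have r12: "c1*c2+d1*d2 = -(a1*a2+b1*b2)" using assms(1) by linarith
  have r34: "c3*c4+d3*d4 = -(a3*a4+b3*b4)" using assms(6) by linarith
  have r13: "c1*c3+d1*d3 = -(a1*a3+b1*b3)" using assms(2) by linarith
  have r14: "c1*c4+d1*d4 = -(a1*a4+b1*b4)" using assms(3) by linarith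
  have r23: "c2*c3+d2*d3 = -(a2*a3+b2*b3)" using assms(4) by linarith
  have r24: "c2*c4+d2*d4 = -(a2*a4+b2*b4)" using assms(5) by linarith
  have m: "(c1*d2-c2*d1)*(c3*d4-c4*d3) = (a1*b2-a2*b1)*(a3*b4-a4*b3)"
    unfolding m1 m2 r13 r14 r23 r24 by (simp add: algebra_simps)
  have "2*(c1*c2+d1*d2)*(c1*d2-c2*d1) * (2*(c3*c4+d3*d4)*(c3*d4-c4*d3))
      = 4*((c1*c2+d1*d2)*(c3*c4+d3*d4))*((c1*d2-c2*d1)*(c3*d4-c4*d3))" by (rule aux4)
  also have "\<dots> = 4*((a1*a2+b1*b2)*(a3*a4+b3*b4))*((a1*b2-a2*b1)*(a3*b4-a4*b3))"
    unfolding m r12 r34 by (simp only: minus_mult_minus)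
  also have "\<dots> = 2*(a1*a2+b1*b2)*(a1*b2-a2*b1) * (2*(a3*a4+b3*b4)*(a3*b4-a4*b3))"
    by (rule aux4[symmetric])
  finally show ?thesis unfolding e1 e2 e3 e4 .
qed


lemma Im_ofr: "Im (complex_of_real r * w) = r * Im w" by simp
lemma Im_ofr_cnj: "Im (complex_of_real r * cnj w) = - r * Im w" by simp

lemma cross_scale: "cross (a*x) (a*y) = (cmod a)\<^sup>2 * cross x y"
proof -
  have "cnj (a*x) * (a*y) = (a * cnj a) * (cnj x * y)"
    by (simp add: mult_ac)
  also have "\<dots> = complex_of_real ((cmod a)\<^sup>2) * (cnj x * y)"
    by (simp only: complex_norm_square)
  finally have eq: "cnj (a*x) * (a*y) = complex_of_real ((cmod a)\<^sup>2) * (cnj x * y)" .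
  show ?thesis unfolding cross_def eq by (rule Im_ofr)
qed

lemma cross_scale_cnj: "cross (a*cnj x) (a*cnj y) = - (cmod a)\<^sup>2 * cross x y"
proof -
  have "cnj (a*cnj x) * (a*cnj y) = (a * cnj a) * cnj (cnj x * y)"
    by (simp add: mult_ac)
  also have "\<dots> = complex_of_real ((cmod a)\<^sup>2) * cnj (cnj x * y)"
    by (simp only: complex_norm_square)
  finally have eq: "cnj (a*cnj x) * (a*cnj y) = complex_of_real ((cmod a)\<^sup>2) * cnj (cnj x * y)" .
  show ?thesis unfolding cross_def eq by (rule Im_ofr_cnj)
qed

lemma uniq_real:
  fixes e1 e2 x1 x2 y1 y2 :: real
  assumes "e1\<^sup>2 + e2\<^sup>2 \<noteq> 0" "x1\<^sup>2+x2\<^sup>2 = y1\<^sup>2+y2\<^sup>2" "e1*x1+e2*x2 = e1*y1+e2*y2"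
    "(e1*x2-e2*x1)*(e1*y2-e2*y1) > 0"
  shows "x1 = y1 \<and> x2 = y2"
proof -
  have i1: "(e1\<^sup>2+e2\<^sup>2)*(x1\<^sup>2+x2\<^sup>2) = (e1*x1+e2*x2)\<^sup>2 + (e1*x2-e2*x1)\<^sup>2"
    by (simp add: power2_eq_square algebra_simps)
  have i2: "(e1\<^sup>2+e2\<^sup>2)*(y1\<^sup>2+y2\<^sup>2) = (e1*y1+e2*y2)\<^sup>2 + (e1*y2-e2*y1)\<^sup>2"
    by (simp add: power2_eq_square algebra_simps)
  have "(e1*x2-e2*x1)\<^sup>2 = (e1*y2-e2*y1)\<^sup>2" using i1 i2 assms(2,3) by simp
  then have "e1*x2-e2*x1 = e1*y2-e2*y1 \<or> e1*x2-e2*x1 = -(e1*y2-e2*y1)"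
    using power2_eq_iff by blast
  then have s: "e1*x2-e2*x1 = e1*y2-e2*y1"
    using assms(4) by (smt (verit) mult_minus_left zero_less_mult_iff)
  have j1: "(e1\<^sup>2+e2\<^sup>2)*x1 = e1*(e1*x1+e2*x2) - e2*(e1*x2-e2*x1)"
    by (simp add: power2_eq_square algebra_simps)
  have j2: "(e1\<^sup>2+e2\<^sup>2)*y1 = e1*(e1*y1+e2*y2) - e2*(e1*y2-e2*y1)"
    by (simp add: power2_eq_square algebra_simps)
  have k1: "(e1\<^sup>2+e2\<^sup>2)*x2 = e2*(e1*x1+e2*x2) + e1*(e1*x2-e2*x1)"
    by (simp add: power2_eq_square algebra_simps)
  have k2: "(e1\<^sup>2+e2\<^sup>2)*y2 = e2*(e1*y1+e2*y2) + e1*(e1*y2-e2*y1)"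
    by (simp add: power2_eq_square algebra_simps)
  have "(e1\<^sup>2+e2\<^sup>2)*x1 = (e1\<^sup>2+e2\<^sup>2)*y1" using j1 j2 s assms(3) by simp
  then have "x1 = y1" using mult_left_cancel[OF assms(1)] by blast
  moreover have "(e1\<^sup>2+e2\<^sup>2)*x2 = (e1\<^sup>2+e2\<^sup>2)*y2" using k1 k2 s assms(3) by simp
  then have "x2 = y2" using mult_left_cancel[OF assms(1)] by blast
  ultimately show ?thesis by simp
qed

lemma cmod_sq: "(cmod z)\<^sup>2 = (Re z)\<^sup>2 + (Im z)\<^sup>2"
  by (simp add: cmod_def)

lemma tri_unique:
  assumes "P \<noteq> Q" "cmod (X-P) = cmod (Y-P)" "cmod (X-Q) = cmod (Y-Q)"
    "cross (Q-P) (X-P) * cross (Q-P) (Y-P) > 0"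
  shows "X = Y"
proof -
  define e1 where "e1 = Re (Q-P)"
  define e2 where "e2 = Im (Q-P)"
  define x1 where "x1 = Re (X-P)"
  define x2 where "x2 = Im (X-P)"
  define y1 where "y1 = Re (Y-P)"
  define y2 where "y2 = Im (Y-P)"
  have "e1\<^sup>2 + e2\<^sup>2 \<noteq> 0" using assms(1) unfolding e1_def e2_def
    by (metis cmod_sq right_minus_eq zero_less_norm_iff zero_less_power2 less_irrefl)
  moreover have a: "x1\<^sup>2+x2\<^sup>2 = y1\<^sup>2+y2\<^sup>2" using assms(2) unfolding e1_def x1_def x2_def y1_def y2_def
    by (metis cmod_sq)
  moreover have "(cmod (X-Q))\<^sup>2 = (x1-e1)\<^sup>2 + (x2-e2)\<^sup>2" unfolding cmod_sq e1_def x1_def x2_def e2_def by simp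
  moreover have "(cmod (Y-Q))\<^sup>2 = (y1-e1)\<^sup>2 + (y2-e2)\<^sup>2" unfolding cmod_sq e1_def y1_def y2_def e2_def by simp
  ultimately have b: "e1*x1+e2*x2 = e1*y1+e2*y2" using assms(3)
    by (simp add: power2_eq_square algebra_simps) 
  have "cross (Q-P) (X-P) = e1*x2-e2*x1" "cross (Q-P) (Y-P) = e1*y2-e2*y1"
    unfolding cross_def e1_def e2_def x1_def x2_def y1_def y2_def by (simp_all add: algebra_simps)
  then have "x1 = y1 \<and> x2 = y2" using uniq_real[OF _ a b] assms(4) \<open>e1\<^sup>2 + e2\<^sup>2 \<noteq> 0\<close> by simp
  then have "X - P = Y - P" unfolding x1_def x2_def y1_def y2_def using complex_eqI by blast
  then show ?thesis by simp
qed


lemma sign3: fixes x y n d :: real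
  assumes "x*n < 0" "y*d < 0" "x*y > 0" shows "n*d > 0"
  using assms by (smt (verit) mult_less_0_iff zero_less_mult_iff)

lemma sign3': fixes x y n d :: real
  assumes "x*n < 0" "y*d < 0" "x*y < 0" shows "n*d < 0"
  using assms by (smt (verit) mult_less_0_iff zero_less_mult_iff)

lemma cmod_eq_sq: "p \<ge> 0 \<Longrightarrow> (cmod z)\<^sup>2 = p\<^sup>2 \<Longrightarrow> cmod z = p"
  using power2_eq_iff_nonneg norm_ge_zero by blast

lemma tri_exists:
  assumes "P \<noteq> Q" "\<bar>p - q\<bar> < cmod (Q-P)" "cmod (Q-P) < p + q" "cross (Q-P) (Y-P) \<noteq> 0"
  shows "\<exists>X. same_open_side P Q X Y \<and> cmod (X-P) = p \<and> cmod (X-Q) = q"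
proof -
  define e where "e = cmod (Q-P)"
  have e0: "e > 0" using assms(1) unfolding e_def by simp
  have p0: "p > 0" and q0: "q > 0" using assms(2,3) unfolding e_def[symmetric] by linarith+
  define x where "x = (e\<^sup>2+p\<^sup>2-q\<^sup>2)/(2*e)"
  have f1: "q+p-e > 0" "q-p+e > 0" "e+p-q > 0" "e+p+q > 0"
    using assms(2,3) p0 q0 unfolding e_def[symmetric] by linarith+
  have id: "(2*e*p)\<^sup>2 - (e\<^sup>2+p\<^sup>2-q\<^sup>2)\<^sup>2 = (q+p-e)*(q-p+e)*(e+p-q)*(e+p+q)"
    by (simp add: power2_eq_square algebra_simps)
  have "(q+p-e)*(q-p+e)*(e+p-q)*(e+p+q) > 0" using f1 by simp
  then have "(2*e*p)\<^sup>2 > (e\<^sup>2+p\<^sup>2-q\<^sup>2)\<^sup>2" using id by linarith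
  moreover have "(e\<^sup>2+p\<^sup>2-q\<^sup>2) = 2*e*x" unfolding x_def using e0 by simp
  ultimately have "(2*e)\<^sup>2 * p\<^sup>2 > (2*e)\<^sup>2 * x\<^sup>2" by (simp add: power_mult_distrib)
  then have px: "p\<^sup>2 - x\<^sup>2 > 0" using e0 by simp
  define y where "y = sqrt (p\<^sup>2 - x\<^sup>2)"
  have y0: "y > 0" and y2: "y\<^sup>2 = p\<^sup>2 - x\<^sup>2" using px unfolding y_def by simp_all
  define \<sigma> where "\<sigma> = sgn (cross (Q-P) (Y-P))"
  have s2: "\<sigma>\<^sup>2 = 1" using assms(4) unfolding \<sigma>_def by (simp add: sgn_if)
  define c where "c = Complex (x/e) (\<sigma>*y/e)"
  define X where "X = P + (Q-P)*c"
  have "(cmod (X-P))\<^sup>2 = e\<^sup>2 * (cmod c)\<^sup>2" unfolding X_def e_def by (simp add: norm_mult power_mult_distrib)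
  also have "\<dots> = e\<^sup>2 * ((x/e)\<^sup>2 + (\<sigma>*y/e)\<^sup>2)" unfolding c_def cmod_sq by simp
  also have "\<dots> = x\<^sup>2 + \<sigma>\<^sup>2*y\<^sup>2" using e0 by (simp add: power_divide power_mult_distrib field_simps)
  also have "\<dots> = p\<^sup>2" using s2 y2 by simp
  finally have dP: "cmod (X-P) = p" using cmod_eq_sq p0 by simp
  have "X - Q = (Q-P)*(c - 1)" unfolding X_def by (simp add: algebra_simps)
  then have "(cmod (X-Q))\<^sup>2 = e\<^sup>2 * (cmod (c-1))\<^sup>2" unfolding e_def by (simp add: norm_mult power_mult_distrib)
  also have "\<dots> = e\<^sup>2 * ((x/e - 1)\<^sup>2 + (\<sigma>*y/e)\<^sup>2)" unfolding c_def cmod_sq by simp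
  also have "\<dots> = (x - e)\<^sup>2 + \<sigma>\<^sup>2*y\<^sup>2" using e0 by (simp add: power_divide power_mult_distrib field_simps)
  also have "\<dots> = p\<^sup>2 + e\<^sup>2 - 2*e*x" using s2 y2 by (simp add: power2_eq_square algebra_simps)
  also have "\<dots> = q\<^sup>2" unfolding x_def using e0 by simp
  finally have dQ: "cmod (X-Q) = q" using cmod_eq_sq q0 by simp
  have "cross (Q-P) (X-P) = cross ((Q-P)*1) ((Q-P)*c)" unfolding X_def by simp
  also have "\<dots> = e\<^sup>2 * cross 1 c" unfolding e_def by (rule cross_scale)
  also have "\<dots> = e * \<sigma> * y" unfolding cross_def c_def using e0 by (simp add: power2_eq_square)
  finally have cX: "cross (Q-P) (X-P) = e * \<sigma> * y" .
  have m: "cross (Q-P) (X-P) * cross (Q-P) (Y-P) = (e * y) * (\<sigma> * cross (Q-P) (Y-P))"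
    unfolding cX by (simp add: ac_simps)
  have "\<sigma> * cross (Q-P) (Y-P) > 0" unfolding \<sigma>_def using assms(4)
    by (simp add: sgn_if)
  then have "(e * y) * (\<sigma> * cross (Q-P) (Y-P)) > 0" using e0 y0 by simp
  then have "same_open_side P Q X Y" unfolding same_open_side_def m .
  then show ?thesis using dP dQ by blast
qed

lemma cong4:
  assumes "M \<noteq> K" "cmod (M-K) = cmod (C-A)" "cmod (L-K) = cmod (B1-A)" "cmod (L-M) = cmod (B1-C)"
    "cmod (N-K) = cmod (D1-A)" "cmod (N-M) = cmod (D1-C)"
    "cross (M-K) (L-K) * cross (M-K) (N-K) < 0" "cross (C-A) (B1-A) * cross (C-A) (D1-A) < 0"
  shows "\<exists>f. isometry f \<and> f K = A \<and> f L = B1 \<and> f M = C \<and> f N = D1"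
proof -
  have AC: "A \<noteq> C" using assms(1,2) by (metis norm_eq_zero right_minus_eq)
  have MK0: "M - K \<noteq> 0" using assms(1) by simp
  show ?thesis
  proof (cases "cross (M-K) (L-K) * cross (C-A) (B1-A) > 0")
    case True
    define \<alpha> where "\<alpha> = (C-A)/(M-K)"
    have a1: "cmod \<alpha> = 1" unfolding \<alpha>_def using assms(1,2) AC by (simp add: norm_divide)
    have CA: "C - A = \<alpha>*(M-K)" unfolding \<alpha>_def using MK0 by simp
    define f where "f z = A + \<alpha>*(z-K)" for z
    have iso: "isometry f" unfolding isometry_def f_def dist_norm
      by (simp add: right_diff_distrib[symmetric] norm_mult a1)
    have fK: "f K = A" unfolding f_def by simp
    have fM: "f M = C" unfolding f_def CA[symmetric] by simp
    have fA: "f z - A = \<alpha>*(z-K)" for z unfolding f_def by simp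
    have fC: "f z - C = \<alpha>*(z-M)" for z
    proof -
      have "f z - C = \<alpha>*(z-K) - (C-A)" unfolding f_def by simp
      then show ?thesis unfolding CA by (simp add: algebra_simps)
    qed
    have cr: "cross (C-A) (f z - A) = cross (M-K) (z-K)" for z
      unfolding CA fA cross_scale a1 by simp
    have fL: "f L = B1"
    proof (rule tri_unique[OF AC])
      show "cmod (f L - A) = cmod (B1 - A)" unfolding fA norm_mult a1 using assms(3) by simp
      show "cmod (f L - C) = cmod (B1 - C)" unfolding fC norm_mult a1 using assms(4) by simp
      show "cross (C-A) (f L - A) * cross (C-A) (B1-A) > 0" unfolding cr using True .
    qed
    have fN: "f N = D1"
    proof (rule tri_unique[OF AC])
      show "cmod (f N - A) = cmod (D1 - A)" unfolding fA norm_mult a1 using assms(5) by simp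
      show "cmod (f N - C) = cmod (D1 - C)" unfolding fC norm_mult a1 using assms(6) by simp
      show "cross (C-A) (f N - A) * cross (C-A) (D1-A) > 0" unfolding cr
        using sign3[OF assms(7,8) True] .
    qed
    show ?thesis using iso fK fL fM fN by blast
  next
    case False
    have nz: "cross (M-K) (L-K) \<noteq> 0" "cross (C-A) (B1-A) \<noteq> 0" using assms(7,8) by auto
    have neg: "cross (M-K) (L-K) * cross (C-A) (B1-A) < 0" using False nz
      by (metis linorder_neqE_linordered_idom mult_eq_0_iff)
    define \<beta> where "\<beta> = (C-A)/cnj (M-K)"
    have cm: "cmod (cnj (M-K)) = cmod (C-A)" using assms(2) by (simp only: complex_mod_cnj)
    have a1: "cmod \<beta> = 1" unfolding \<beta>_def norm_divide cm using AC by simp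
    have CA: "C - A = \<beta>*cnj (M-K)" unfolding \<beta>_def using MK0 by simp
    define f where "f z = A + \<beta>*cnj (z-K)" for z
    have iso: "isometry f" unfolding isometry_def
    proof (intro allI)
      fix x y
      have "f x - f y = \<beta> * cnj (x - y)" unfolding f_def by (simp add: algebra_simps)
      then show "dist (f x) (f y) = dist x y" unfolding dist_norm by (simp only: norm_mult a1 complex_mod_cnj mult_1)
    qed
    have fK: "f K = A" unfolding f_def by simp
    have fM: "f M = C" unfolding f_def CA[symmetric] by simp
    have fA: "f z - A = \<beta>*cnj (z-K)" for z unfolding f_def by simp
    have fC: "f z - C = \<beta>*cnj (z-M)" for z
    proof -
      have "f z - C = \<beta>*cnj (z-K) - (C-A)" unfolding f_def by simp
      then show ?thesis unfolding CA by (simp add: algebra_simps)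
    qed
    have cr: "cross (C-A) (f z - A) = - cross (M-K) (z-K)" for z
      unfolding CA fA cross_scale_cnj a1 by simp
    have fL: "f L = B1"
    proof (rule tri_unique[OF AC])
      show "cmod (f L - A) = cmod (B1 - A)" unfolding fA norm_mult a1 complex_mod_cnj using assms(3) by simp
      show "cmod (f L - C) = cmod (B1 - C)" unfolding fC norm_mult a1 complex_mod_cnj using assms(4) by simp
      show "cross (C-A) (f L - A) * cross (C-A) (B1-A) > 0" unfolding cr using neg by simp
    qed
    have fN: "f N = D1"
    proof (rule tri_unique[OF AC])
      show "cmod (f N - A) = cmod (D1 - A)" unfolding fA norm_mult a1 complex_mod_cnj using assms(5) by simp
      show "cmod (f N - C) = cmod (D1 - C)" unfolding fC norm_mult a1 complex_mod_cnj using assms(6) by simp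
      show "cross (C-A) (f N - A) * cross (C-A) (D1-A) > 0" unfolding cr
        using sign3'[OF assms(7,8) neg] by simp
    qed
    show ?thesis using iso fK fL fM fN by blast
  qed
qed


lemma strict_tri:
  assumes "cross x y \<noteq> 0"
  shows "\<bar>cmod x - cmod y\<bar> < cmod (x+y) \<and> cmod (x+y) < cmod x + cmod y"
proof -
  define x1 x2 y1 y2 where defs: "x1 = Re x" "x2 = Im x" "y1 = Re y" "y2 = Im y"
  have cr: "x1*y2 - x2*y1 \<noteq> 0" using assms unfolding cross_def defs by (simp add: algebra_simps)
  have nx: "(cmod x)\<^sup>2 = x1\<^sup>2+x2\<^sup>2" and ny: "(cmod y)\<^sup>2 = y1\<^sup>2+y2\<^sup>2"
    and nxy: "(cmod (x+y))\<^sup>2 = (x1+y1)\<^sup>2+(x2+y2)\<^sup>2" unfolding defs cmod_sq by simp_all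
  have lag: "(cmod x * cmod y)\<^sup>2 = (x1*y1+x2*y2)\<^sup>2 + (x1*y2-x2*y1)\<^sup>2"
    unfolding power_mult_distrib nx ny by (simp add: power2_eq_square algebra_simps)
  have "(x1*y1+x2*y2)\<^sup>2 < (cmod x * cmod y)\<^sup>2" using lag cr by simp
  then have lt: "\<bar>x1*y1+x2*y2\<bar> < cmod x * cmod y"
    by (metis abs_ge_zero norm_ge_zero mult_nonneg_nonneg power2_abs power_less_imp_less_base)
  have e: "(cmod (x+y))\<^sup>2 = (cmod x)\<^sup>2 + (cmod y)\<^sup>2 + 2*(x1*y1+x2*y2)"
    unfolding nx ny nxy by (simp add: power2_eq_square algebra_simps)
  have "(cmod (x+y))\<^sup>2 < (cmod x + cmod y)\<^sup>2" unfolding e using lt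
    by (simp add: power2_eq_square algebra_simps)
  then have A: "cmod (x+y) < cmod x + cmod y"
    by (simp add: power_less_imp_less_base)
  have "(cmod x - cmod y)\<^sup>2 < (cmod (x+y))\<^sup>2" unfolding e using lt
    by (simp add: power2_eq_square algebra_simps)
  then have "\<bar>cmod x - cmod y\<bar>\<^sup>2 < (cmod (x+y))\<^sup>2" by simp
  then have B: "\<bar>cmod x - cmod y\<bar> < cmod (x+y)"
    using power_less_imp_less_base by fastforce
  show ?thesis using A B by simp
qed

lemma sqfacts:
  assumes "u\<^sup>2 = z"
  shows "Re z = (Re u)\<^sup>2 - (Im u)\<^sup>2" "Im z = 2*Re u*Im u" "cmod z = (Re u)\<^sup>2 + (Im u)\<^sup>2"
proof -
  show "Re z = (Re u)\<^sup>2 - (Im u)\<^sup>2" "Im z = 2*Re u*Im u" using assms[symmetric] by (simp_all add: power2_eq_square)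
  have "cmod z = (cmod u)\<^sup>2" using assms[symmetric] by (simp add: norm_power)
  then show "cmod z = (Re u)\<^sup>2 + (Im u)\<^sup>2" by (simp add: cmod_sq)
qed



lemma sgnpos: fixes x y S :: real assumes "x*S > 0" "y*S > 0" shows "x*y > 0"
  using assms by (smt (verit) mult_less_0_iff zero_less_mult_iff)

lemma sgnneg: fixes x y b d :: real assumes "x*b > 0" "y*d > 0" "b*d < 0" shows "x*y < 0"
  using assms by (smt (verit) mult_less_0_iff zero_less_mult_iff)

lemma crossRI: "cross x y = Re x * Im y - Im x * Re y" by (simp add: cross_def)
lemma cross_aux1: "cross (x+y) x = - cross x y" by (simp add: cross_def algebra_simps)
lemma cross_aux2: "cross (x+y) (x+y+v) = cross v (-(x+y+v))" by (simp add: cross_def algebra_simps)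

theorem mainTheorem14:
  fixes A B C D :: complex
  defines "s \<equiv> edge A B C D"
  assumes "convex_quad A B C D"
    and "perimeter A B C D = 2"
  shows "(\<exists>B1. same_open_side A C B1 B \<and>
            cmod (B1 - A) = (cmod (s 2) + cmod (s 3) + cmod (s 4) - cmod (s 1)) / 2 \<and>
            cmod (B1 - C) = (cmod (s 1) + cmod (s 3) + cmod (s 4) - cmod (s 2)) / 2) \<and>
         (\<exists>D1. same_open_side A C D1 D \<and>
            cmod (D1 - A) = (cmod (s 1) + cmod (s 2) + cmod (s 3) - cmod (s 4)) / 2 \<and>
            cmod (D1 - C) = (cmod (s 1) + cmod (s 2) + cmod (s 4) - cmod (s 3)) / 2) \<and>
         (\<forall>B1 D1 K L M N.
            same_open_side A C B1 B \<and>
            cmod (B1 - A) = (cmod (s 2) + cmod (s 3) + cmod (s 4) - cmod (s 1)) / 2 \<and>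
            cmod (B1 - C) = (cmod (s 1) + cmod (s 3) + cmod (s 4) - cmod (s 2)) / 2 \<and>
            same_open_side A C D1 D \<and>
            cmod (D1 - A) = (cmod (s 1) + cmod (s 2) + cmod (s 3) - cmod (s 4)) / 2 \<and>
            cmod (D1 - C) = (cmod (s 1) + cmod (s 2) + cmod (s 4) - cmod (s 3)) / 2 \<and>
            dual_quad A B C D K L M N
            \<longrightarrow> (\<exists>f. isometry f \<and> f K = A \<and> f L = B1 \<and> f M = C \<and> f N = D1))"
proof -
  have z1: "s 1 = B - A" and z2: "s 2 = C - B" and z3: "s 3 = D - C" and z4: "s 4 = A - D"
    unfolding s_def edge_def by simp_all
  have U4: "{1..4::nat} = {1,2,3,4}" by auto
  have per: "cmod (s 1) + cmod (s 2) + cmod (s 3) + cmod (s 4) = 2"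
    using assms(3) unfolding perimeter_def s_def U4 by (simp add: add.assoc)
  have cv: "\<forall>k\<in>{1..4}. cross (s k) (s (nxt k)) * signed_area2 A B C D > 0"
    using assms(2) unfolding convex_quad_def s_def by blast
  have nx1: "nxt 1 = 2" and nx3: "nxt 3 = 4" by (simp_all add: nxt_def)
  have "(1::nat) \<in> {1..4}" "(3::nat) \<in> {1..4}" by simp_all
  then have c12: "cross (s 1) (s 2) * signed_area2 A B C D > 0"
    and c34: "cross (s 3) (s 4) * signed_area2 A B C D > 0"
    using cv unfolding nx1[symmetric] nx3[symmetric] by blast+
  have P: "cross (s 1) (s 2) * cross (s 3) (s 4) > 0" using sgnpos[OF c12 c34] .
  have n12: "cross (s 1) (s 2) \<noteq> 0" and n34: "cross (s 3) (s 4) \<noteq> 0" using P by auto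
  have CA1: "C - A = s 1 + s 2" unfolding z1 z2 by simp
  have CA2: "C - A = -(s 3 + s 4)" unfolding z3 z4 by simp
  have CAn: "cmod (C - A) = cmod (s 3 + s 4)" unfolding CA2 by (simp only: norm_minus_cancel)
  note T12 = strict_tri[OF n12, THEN conjunct1] strict_tri[OF n12, THEN conjunct2]
  note T34 = strict_tri[OF n34, THEN conjunct1] strict_tri[OF n34, THEN conjunct2]
  have crB: "cross (C-A) (B-A) = - cross (s 1) (s 2)" unfolding z1 z2 cross_def by (simp add: algebra_simps)
  have crD: "cross (C-A) (D-A) = cross (s 3) (s 4)" unfolding z3 z4 cross_def by (simp add: algebra_simps)
  have BD: "cross (C-A) (B-A) * cross (C-A) (D-A) < 0" unfolding crB crD using P by simp
  have AC: "A \<noteq> C" using T12 CA1 by fastforce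
  have ex1: "\<exists>B1. same_open_side A C B1 B \<and>
            cmod (B1 - A) = (cmod (s 2) + cmod (s 3) + cmod (s 4) - cmod (s 1)) / 2 \<and>
            cmod (B1 - C) = (cmod (s 1) + cmod (s 3) + cmod (s 4) - cmod (s 2)) / 2"
  proof (rule tri_exists[OF AC])
    show "\<bar>(cmod (s 2) + cmod (s 3) + cmod (s 4) - cmod (s 1)) / 2 - (cmod (s 1) + cmod (s 3) + cmod (s 4) - cmod (s 2)) / 2\<bar> < cmod (C - A)"
    proof -
      have e: "(cmod (s 2) + cmod (s 3) + cmod (s 4) - cmod (s 1)) / 2 - (cmod (s 1) + cmod (s 3) + cmod (s 4) - cmod (s 2)) / 2 = cmod (s 2) - cmod (s 1)"
        by (simp add: field_simps)
      have "\<bar>cmod (s 2) - cmod (s 1)\<bar> = \<bar>cmod (s 1) - cmod (s 2)\<bar>" by (rule abs_minus_commute)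
      then show ?thesis unfolding e CA1 using T12 by linarith
    qed
    show "cmod (C - A) < (cmod (s 2) + cmod (s 3) + cmod (s 4) - cmod (s 1)) / 2 + (cmod (s 1) + cmod (s 3) + cmod (s 4) - cmod (s 2)) / 2"
      unfolding CAn using T34 by (simp add: field_simps)
    show "cross (C - A) (B - A) \<noteq> 0" using crB n12 by simp
  qed
  have ex2: "\<exists>D1. same_open_side A C D1 D \<and>
            cmod (D1 - A) = (cmod (s 1) + cmod (s 2) + cmod (s 3) - cmod (s 4)) / 2 \<and>
            cmod (D1 - C) = (cmod (s 1) + cmod (s 2) + cmod (s 4) - cmod (s 3)) / 2"
  proof (rule tri_exists[OF AC])
    show "\<bar>(cmod (s 1) + cmod (s 2) + cmod (s 3) - cmod (s 4)) / 2 - (cmod (s 1) + cmod (s 2) + cmod (s 4) - cmod (s 3)) / 2\<bar> < cmod (C - A)"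
    proof -
      have e: "(cmod (s 1) + cmod (s 2) + cmod (s 3) - cmod (s 4)) / 2 - (cmod (s 1) + cmod (s 2) + cmod (s 4) - cmod (s 3)) / 2 = cmod (s 3) - cmod (s 4)"
        by (simp add: field_simps)
      show ?thesis unfolding e CAn using T34 by linarith
    qed
    show "cmod (C - A) < (cmod (s 1) + cmod (s 2) + cmod (s 3) - cmod (s 4)) / 2 + (cmod (s 1) + cmod (s 2) + cmod (s 4) - cmod (s 3)) / 2"
      unfolding CA1 using T12 by (simp add: field_simps)
    show "cross (C - A) (D - A) \<noteq> 0" using crD n34 by simp
  qed
  have main: "\<exists>f. isometry f \<and> f K = A \<and> f L = B1 \<and> f M = C \<and> f N = D1"
    if H: "same_open_side A C B1 B"
            "cmod (B1 - A) = (cmod (s 2) + cmod (s 3) + cmod (s 4) - cmod (s 1)) / 2"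
            "cmod (B1 - C) = (cmod (s 1) + cmod (s 3) + cmod (s 4) - cmod (s 2)) / 2"
            "same_open_side A C D1 D"
            "cmod (D1 - A) = (cmod (s 1) + cmod (s 2) + cmod (s 3) - cmod (s 4)) / 2"
            "cmod (D1 - C) = (cmod (s 1) + cmod (s 2) + cmod (s 4) - cmod (s 3)) / 2"
            "dual_quad A B C D K L M N" for B1 D1 K L M N
  proof -
    obtain u c d where adm: "admissible_roots A B C D u" and db: "dual_basis u c d"
      and wL: "L - K = dual_edge c d 1" and wM: "M - L = dual_edge c d 2"
      and wN: "N - M = dual_edge c d 3" and wK: "K - N = dual_edge c d 4"
      using H(7) unfolding dual_quad_def by blast
    have us: "(u k)\<^sup>2 = s k" if "k \<in> {1..4}" for k
      using adm that unfolding admissible_roots_def s_def by blast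
    define a1 where "a1 = Re (u 1)"
    define a2 where "a2 = Re (u 2)"
    define a3 where "a3 = Re (u 3)"
    define a4 where "a4 = Re (u 4)"
    define b1 where "b1 = Im (u 1)"
    define b2 where "b2 = Im (u 2)"
    define b3 where "b3 = Im (u 3)"
    define b4 where "b4 = Im (u 4)"
    define c1 where "c1 = c 1"
    define c2 where "c2 = c 2"
    define c3 where "c3 = c 3"
    define c4 where "c4 = c 4"
    define d1 where "d1 = d 1"
    define d2 where "d2 = d 2"
    define d3 where "d3 = d 3"
    define d4 where "d4 = d 4"
    note S1 = sqfacts[OF us[of 1, simplified]] and S2 = sqfacts[OF us[of 2, simplified]]
     and S3 = sqfacts[OF us[of 3, simplified]] and S4 = sqfacts[OF us[of 4, simplified]]
    have W: "(Complex (c k) (d k))\<^sup>2 = dual_edge c d k" for k unfolding dual_edge_def by simp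
    note W1 = sqfacts[OF W[of 1]] and W2 = sqfacts[OF W[of 2]] and W3 = sqfacts[OF W[of 3]] and W4 = sqfacts[OF W[of 4]]
    have zs: "s 1 + s 2 + s 3 + s 4 = 0" unfolding z1 z2 z3 z4 by simp
    have re0: "(a1\<^sup>2-b1\<^sup>2) + (a2\<^sup>2-b2\<^sup>2) + (a3\<^sup>2-b3\<^sup>2) + (a4\<^sup>2-b4\<^sup>2) = 0"
      using arg_cong[OF zs, of Re] S1(1) S2(1) S3(1) S4(1) unfolding a1_def a2_def a3_def a4_def b1_def b2_def b3_def b4_def
      by simp
    have im0: "2*a1*b1 + 2*a2*b2 + 2*a3*b3 + 2*a4*b4 = 0"
      using arg_cong[OF zs, of Im] S1(2) S2(2) S3(2) S4(2) unfolding a1_def a2_def a3_def a4_def b1_def b2_def b3_def b4_def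
      by simp
    have pr: "(a1\<^sup>2+b1\<^sup>2) + (a2\<^sup>2+b2\<^sup>2) + (a3\<^sup>2+b3\<^sup>2) + (a4\<^sup>2+b4\<^sup>2) = 2"
      using per S1(3) S2(3) S3(3) S4(3) unfolding a1_def a2_def a3_def a4_def b1_def b2_def b3_def b4_def
      by simp
    have db': "c1*a1+c2*a2+c3*a3+c4*a4 = 0" "c1*b1+c2*b2+c3*b3+c4*b4 = 0"
       "d1*a1+d2*a2+d3*a3+d4*a4 = 0" "d1*b1+d2*b2+d3*b3+d4*b4 = 0"
       "c1*c1+c2*c2+c3*c3+c4*c4 = 1" "d1*d1+d2*d2+d3*d3+d4*d4 = 1" "c1*d1+c2*d2+c3*d3+c4*d4 = 0"
      using db unfolding dual_basis_def U4 a1_def a2_def a3_def a4_def b1_def b2_def b3_def b4_def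
        c1_def c2_def c3_def c4_def d1_def d2_def d3_def d4_def by (simp_all add: add.assoc)
    have col: "a1*a1+a2*a2+a3*a3+a4*a4 = 1" "b1*b1+b2*b2+b3*b3+b4*b4 = 1" "a1*b1+a2*b2+a3*b3+a4*b4 = 0"
    proof -
      show "a1*a1+a2*a2+a3*a3+a4*a4 = 1" using re0 pr unfolding power2_eq_square by linarith
      show "b1*b1+b2*b2+b3*b3+b4*b4 = 1" using re0 pr unfolding power2_eq_square by linarith
      show "a1*b1+a2*b2+a3*b3+a4*b4 = 0" using im0 by linarith
    qed
    have R: "a1*a1+b1*b1+c1*c1+d1*d1 = 1 \<and> a2*a2+b2*b2+c2*c2+d2*d2 = 1 \<and>
         a3*a3+b3*b3+c3*c3+d3*d3 = 1 \<and> a4*a4+b4*b4+c4*c4+d4*d4 = 1 \<and>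
         a1*a2+b1*b2+c1*c2+d1*d2 = 0 \<and> a1*a3+b1*b3+c1*c3+d1*d3 = 0 \<and>
         a1*a4+b1*b4+c1*c4+d1*d4 = 0 \<and> a2*a3+b2*b3+c2*c3+d2*d3 = 0 \<and>
         a2*a4+b2*b4+c2*c4+d2*d4 = 0 \<and> a3*a4+b3*b4+c3*c4+d3*d4 = 0"
      by (rule rows_orth) (use col db' in \<open>simp_all add: mult.commute\<close>)
    have w1: "Re (dual_edge c d 1) = c1\<^sup>2 - d1\<^sup>2" "Im (dual_edge c d 1) = 2*c1*d1" "cmod (dual_edge c d 1) = c1\<^sup>2 + d1\<^sup>2"
      using W1 unfolding c1_def d1_def by simp_all
    have w2: "Re (dual_edge c d 2) = c2\<^sup>2 - d2\<^sup>2" "Im (dual_edge c d 2) = 2*c2*d2" "cmod (dual_edge c d 2) = c2\<^sup>2 + d2\<^sup>2"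
      using W2 unfolding c2_def d2_def by simp_all
    have w3: "Re (dual_edge c d 3) = c3\<^sup>2 - d3\<^sup>2" "Im (dual_edge c d 3) = 2*c3*d3" "cmod (dual_edge c d 3) = c3\<^sup>2 + d3\<^sup>2"
      using W3 unfolding c3_def d3_def by simp_all
    have w4: "Re (dual_edge c d 4) = c4\<^sup>2 - d4\<^sup>2" "Im (dual_edge c d 4) = 2*c4*d4" "cmod (dual_edge c d 4) = c4\<^sup>2 + d4\<^sup>2"
      using W4 unfolding c4_def d4_def by simp_all
    have s1: "Re (s 1) = a1\<^sup>2 - b1\<^sup>2" "Im (s 1) = 2*a1*b1" "cmod (s 1) = a1\<^sup>2 + b1\<^sup>2"
      using S1 unfolding a1_def b1_def by simp_all
    have s2: "Re (s 2) = a2\<^sup>2 - b2\<^sup>2" "Im (s 2) = 2*a2*b2" "cmod (s 2) = a2\<^sup>2 + b2\<^sup>2"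
      using S2 unfolding a2_def b2_def by simp_all
    have s3: "Re (s 3) = a3\<^sup>2 - b3\<^sup>2" "Im (s 3) = 2*a3*b3" "cmod (s 3) = a3\<^sup>2 + b3\<^sup>2"
      using S3 unfolding a3_def b3_def by simp_all
    have s4: "Re (s 4) = a4\<^sup>2 - b4\<^sup>2" "Im (s 4) = 2*a4*b4" "cmod (s 4) = a4\<^sup>2 + b4\<^sup>2"
      using S4 unfolding a4_def b4_def by simp_all
    have l1: "cmod (dual_edge c d 1) = 1 - cmod (s 1)" using w1(3) s1(3) R unfolding power2_eq_square by linarith
    have l2: "cmod (dual_edge c d 2) = 1 - cmod (s 2)" using w2(3) s2(3) R unfolding power2_eq_square by linarith
    have l3: "cmod (dual_edge c d 3) = 1 - cmod (s 3)" using w3(3) s3(3) R unfolding power2_eq_square by linarith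
    have l4: "cmod (dual_edge c d 4) = 1 - cmod (s 4)" using w4(3) s4(3) R unfolding power2_eq_square by linarith
    have dLK: "cmod (L-K) = cmod (B1-A)" unfolding wL l1 H(2) using per by (simp add: field_simps)
    have dLM: "cmod (L-M) = cmod (B1-C)"
    proof -
      have "cmod (L-M) = cmod (M-L)" by (rule norm_minus_commute)
      then show ?thesis unfolding wM l2 H(3) using per by (simp add: field_simps)
    qed
    have dNK: "cmod (N-K) = cmod (D1-A)"
    proof -
      have "cmod (N-K) = cmod (K-N)" by (rule norm_minus_commute)
      then show ?thesis unfolding wK l4 H(5) using per by (simp add: field_simps)
    qed
    have dNM: "cmod (N-M) = cmod (D1-C)" unfolding wN l3 H(6) using per by (simp add: field_simps)
    have MK: "M - K = dual_edge c d 1 + dual_edge c d 2" using wL wM by (metis add_diff_cancel diff_add_cancel add.commute diff_diff_eq2)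
    have NK: "N - K = dual_edge c d 1 + dual_edge c d 2 + dual_edge c d 3" using wL wM wN
      by (metis add_diff_cancel diff_add_cancel add.commute diff_diff_eq2)
    have w4e: "dual_edge c d 4 = -(dual_edge c d 1 + dual_edge c d 2 + dual_edge c d 3)"
      using wK NK by (metis minus_diff_eq)
    have "(cmod (M-K))\<^sup>2 = (c1\<^sup>2-d1\<^sup>2+(c2\<^sup>2-d2\<^sup>2))\<^sup>2 + (2*c1*d1+2*c2*d2)\<^sup>2"
      unfolding MK cmod_sq using w1 w2 by simp
    also have "\<dots> = (a1\<^sup>2-b1\<^sup>2+(a2\<^sup>2-b2\<^sup>2))\<^sup>2 + (2*a1*b1+2*a2*b2)\<^sup>2"
      by (rule diag_eq) (use R in auto)
    also have "\<dots> = (cmod (C-A))\<^sup>2" unfolding CA1 cmod_sq using s1 s2 by simp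
    finally have dMK: "cmod (M-K) = cmod (C-A)" using power2_eq_iff_nonneg norm_ge_zero by blast
    have MK0: "M \<noteq> K" using dMK AC by auto
    have cw: "cross (dual_edge c d 1) (dual_edge c d 2) * cross (dual_edge c d 3) (dual_edge c d 4)
        = cross (s 1) (s 2) * cross (s 3) (s 4)"
      unfolding crossRI w1 w2 w3 w4 s1 s2 s3 s4 by (rule cross_eq) (use R in auto)
    have "cross (M-K) (L-K) * cross (M-K) (N-K) =
       - (cross (dual_edge c d 1) (dual_edge c d 2) * cross (dual_edge c d 3) (dual_edge c d 4))"
      unfolding MK NK wL cross_aux1 cross_aux2 w4e[symmetric] by simp
    then have sg1: "cross (M-K) (L-K) * cross (M-K) (N-K) < 0" unfolding cw using P by simp
    have sg2: "cross (C-A) (B1-A) * cross (C-A) (D1-A) < 0"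
      using sgnneg[OF H(1)[unfolded same_open_side_def] H(4)[unfolded same_open_side_def] BD] .
    show ?thesis by (rule cong4[OF MK0 dMK dLK dLM dNK dNM sg1 sg2])
  qed
  show ?thesis using ex1 ex2 main by blast
qed
end
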